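(* Let $k$ be a field of characteristic $p>2$ ($p$ prime). Let $m\ge1$ and $u_1,u_2,\ldots,u_{2m},v\in k_1\langle X\rangle$. Then for any $i$ with $1\le i\le 2m$, $$w_m(u_1,\ldots,u_i+v,\ldots,u_{2m})\equiv w_m(u_1,\ldots,u_i,\ldots,u_{2m})+w_m(u_1,\ldots,v,\ldots,u_{2m})\pmod{S^2+T^{(3)}},$$ where in the last term $v$ occupies the $i$-th argument.
   Context: $X=\{x_i\mid i\ge0\}$ is countably infinite; $k_1\langle X\rangle$ is the free unitary associative $k$-algebra on $X$. $[a,b]=ab-ba$, $[a,b,c]=[[a,b],c]$. A $T$-space is a linear subspace invariant under all endomorphisms of $k_1\langle X\rangle$; a $T$-ideal is a $T$-space that is an ideal. $T^{(3)}$ is the $T$-ideal generated by $[x_1,x_2,x_3]$, and $S^2$ is the $T$-space generated by $[x_1,x_2]$. $\kappa(u,v)=[u,v]u^{p-1}v^{p-1}$, $w_m=\prod_{r=1}^m\kappa(x_{2r-1},x_{2r})$, and $w_m(u_1,\ldots,u_{2m})$ denotes the image of $w_m$ under the endomorphism sending $x_j\mapsto u_j$ for $1\le j\le 2m$. *)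

theory Defs
  imports Main "HOL-Library.Poly_Mapping" "HOL-Computational_Algebra.Primes"
begin

text \<open>The free unitary associative k-algebra on X = {x_i | i >= 0}: finitely supported
  k-linear combinations of words (lists of variable indices).\<close>

type_synonym 'k fa = "nat list \<Rightarrow>\<^sub>0 'k"

definition fa_one :: "'k::field fa" where
  "fa_one = Poly_Mapping.single [] 1"

definition fa_var :: "nat \<Rightarrow> 'k::field fa" where
  "fa_var i = Poly_Mapping.single [i] 1"

definition fa_smult :: "'k::field \<Rightarrow> 'k fa \<Rightarrow> 'k fa" where
  "fa_smult c p = Poly_Mapping.map (\<lambda>a. c * a) p"

definition fa_mult :: "'k::field fa \<Rightarrow> 'k fa \<Rightarrow> 'k fa" where
  "fa_mult p q = (\<Sum>a\<in>Poly_Mapping.keys p. \<Sum>b\<in>Poly_Mapping.keys q.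
      Poly_Mapping.single (a @ b) (Poly_Mapping.lookup p a * Poly_Mapping.lookup q b))"

fun fa_pow :: "'k::field fa \<Rightarrow> nat \<Rightarrow> 'k fa" where
  "fa_pow u 0 = fa_one"
| "fa_pow u (Suc n) = fa_mult u (fa_pow u n)"

definition fa_comm :: "'k::field fa \<Rightarrow> 'k fa \<Rightarrow> 'k fa" where
  "fa_comm a b = fa_mult a b - fa_mult b a"

definition fa_endo :: "('k::field fa \<Rightarrow> 'k fa) \<Rightarrow> bool" where
  "fa_endo \<phi> \<longleftrightarrow> (\<forall>p q. \<phi> (p + q) = \<phi> p + \<phi> q)
     \<and> (\<forall>c p. \<phi> (fa_smult c p) = fa_smult c (\<phi> p))
     \<and> (\<forall>p q. \<phi> (fa_mult p q) = fa_mult (\<phi> p) (\<phi> q))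
     \<and> \<phi> fa_one = fa_one"

definition fa_subspace :: "'k::field fa set \<Rightarrow> bool" where
  "fa_subspace V \<longleftrightarrow> 0 \<in> V \<and> (\<forall>p\<in>V. \<forall>q\<in>V. p + q \<in> V)
     \<and> (\<forall>c. \<forall>p\<in>V. fa_smult c p \<in> V)"

definition T_space :: "'k::field fa set \<Rightarrow> bool" where
  "T_space V \<longleftrightarrow> fa_subspace V \<and> (\<forall>\<phi>. fa_endo \<phi> \<longrightarrow> (\<forall>p\<in>V. \<phi> p \<in> V))"

definition T_ideal :: "'k::field fa set \<Rightarrow> bool" where
  "T_ideal V \<longleftrightarrow> T_space V \<and> (\<forall>p\<in>V. \<forall>a. fa_mult a p \<in> V \<and> fa_mult p a \<in> V)"

definition T_space_gen :: "'k::field fa set \<Rightarrow> 'k fa set" where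
  "T_space_gen G = \<Inter>{V. T_space V \<and> G \<subseteq> V}"

definition T_ideal_gen :: "'k::field fa set \<Rightarrow> 'k fa set" where
  "T_ideal_gen G = \<Inter>{V. T_ideal V \<and> G \<subseteq> V}"

definition T3 :: "'k::field fa set" where
  "T3 = T_ideal_gen {fa_comm (fa_comm (fa_var 1) (fa_var 2)) (fa_var 3)}"

definition S2 :: "'k::field fa set" where
  "S2 = T_space_gen {fa_comm (fa_var 1) (fa_var 2)}"

definition fa_setsum :: "'k::field fa set \<Rightarrow> 'k fa set \<Rightarrow> 'k fa set" where
  "fa_setsum A B = {a + b | a b. a \<in> A \<and> b \<in> B}"

definition fa_word_subst :: "(nat \<Rightarrow> 'k::field fa) \<Rightarrow> nat list \<Rightarrow> 'k fa" where
  "fa_word_subst f w = foldr (\<lambda>j acc. fa_mult (f j) acc) w fa_one"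

definition fa_subst :: "(nat \<Rightarrow> 'k::field fa) \<Rightarrow> 'k fa \<Rightarrow> 'k fa" where
  "fa_subst f p = (\<Sum>w\<in>Poly_Mapping.keys p. fa_smult (Poly_Mapping.lookup p w) (fa_word_subst f w))"

definition kappa :: "'k::field fa \<Rightarrow> 'k fa \<Rightarrow> 'k fa" where
  "kappa u v = fa_mult (fa_comm u v)
      (fa_mult (fa_pow u (CHAR('k) - 1)) (fa_pow v (CHAR('k) - 1)))"

fun w :: "nat \<Rightarrow> 'k::field fa" where
  "w 0 = fa_one"
| "w (Suc m) = fa_mult (w m) (kappa (fa_var (2 * m + 1)) (fa_var (2 * m + 2)))"

definition w_at :: "nat \<Rightarrow> (nat \<Rightarrow> 'k::field fa) \<Rightarrow> 'k fa" where
  "w_at m u = fa_subst (\<lambda>j. if 1 \<le> j \<and> j \<le> 2 * m then u j else fa_var j) (w m)"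

end

theory Submission
  imports Defs
begin


instantiation list :: (type) monoid_add
begin
definition zero_list_def: "0 = []"
definition plus_list_def: "xs + ys = xs @ ys"
instance by standard (auto simp: zero_list_def plus_list_def)
end

lemma fa_expand: "(p::'k::field fa) = (\<Sum>a\<in>Poly_Mapping.keys p. Poly_Mapping.single a (Poly_Mapping.lookup p a))"
  by (rule poly_mapping_eqI)
     (auto simp: lookup_sum lookup_single when_def in_keys_iff sum.delta')

lemma fa_mult_eq: "fa_mult p q = p * (q::'k::field fa)"
proof -
  have "p * q = (\<Sum>a\<in>Poly_Mapping.keys p. Poly_Mapping.single a (Poly_Mapping.lookup p a)) *
     (\<Sum>b\<in>Poly_Mapping.keys q. Poly_Mapping.single b (Poly_Mapping.lookup q b))"
    using fa_expand[of p] fa_expand[of q] by simp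
  also have "\<dots> = fa_mult p q"
    unfolding fa_mult_def sum_distrib_left sum_distrib_right mult_single
    by (subst sum.swap) (simp add: plus_list_def)
  finally show ?thesis by simp
qed

lemma fa_one_eq: "fa_one = (1::'k::field fa)"
  by (simp add: fa_one_def zero_list_def[symmetric])

lemma fa_smult_eq: "fa_smult c p = Poly_Mapping.single [] c * (p::'k::field fa)"
  by (simp add: fa_smult_def mult_map_scale_conv_mult zero_list_def[symmetric])

lemma fa_pow_eq: "fa_pow u n = u ^ n"
  by (induct n) (simp_all add: fa_one_eq fa_mult_eq)

lemma fa_comm_eq: "fa_comm a b = a * b - b * a"
  by (simp add: fa_comm_def fa_mult_eq)

definition sc :: "'k::field \<Rightarrow> 'k fa" where "sc c = Poly_Mapping.single [] c"

lemma sc_single: "sc c * Poly_Mapping.single ww d = Poly_Mapping.single ww (c * d)"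
  by (simp add: sc_def mult_single plus_list_def)
lemma single_sc: "Poly_Mapping.single ww d * sc c = Poly_Mapping.single ww (c * d)"
  by (simp add: sc_def mult_single plus_list_def mult.commute)

lemma sc_central: "sc c * x = x * sc c"
proof -
  have "sc c * x = (\<Sum>a\<in>Poly_Mapping.keys x. sc c * Poly_Mapping.single a (Poly_Mapping.lookup x a))"
    by (subst fa_expand) (simp add: sum_distrib_left)
  also have "\<dots> = (\<Sum>a\<in>Poly_Mapping.keys x. Poly_Mapping.single a (Poly_Mapping.lookup x a) * sc c)"
    by (simp add: sc_single single_sc)
  also have "\<dots> = x * sc c"
    by (subst (2) fa_expand) (simp add: sum_distrib_right)
  finally show ?thesis .
qed

lemma sc_mult: "sc (c * d) = sc c * sc d" by (simp add: sc_def mult_single plus_list_def)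
lemma sc_add: "sc (c + d) = sc c + sc d" by (simp add: sc_def single_add)
lemma sc_of_nat: "sc (of_nat n) = of_nat n" by (simp add: sc_def zero_list_def[symmetric])
lemma sc_one: "sc 1 = 1" by (simp add: sc_def zero_list_def[symmetric])
lemma sc_zero: "sc 0 = 0" by (simp add: sc_def)



lemma ws_nil: "fa_word_subst f [] = 1"
  by (simp add: fa_word_subst_def fa_one_eq)
lemma ws_append: "fa_word_subst f (xs @ ys) = fa_word_subst f xs * fa_word_subst f ys"
  by (induct xs) (simp_all add: fa_word_subst_def fa_one_eq fa_mult_eq mult.assoc)

lemma subst_gen:
  assumes "finite S" "Poly_Mapping.keys p \<subseteq> S"
  shows "fa_subst f p = (\<Sum>ww\<in>S. sc (Poly_Mapping.lookup p ww) * fa_word_subst f ww)"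
  unfolding fa_subst_def fa_smult_eq sc_def[symmetric]
  by (rule sum.mono_neutral_left) (use assms in \<open>auto simp: in_keys_iff sc_zero\<close>)

lemma subst_add: "fa_subst f (p + q) = fa_subst f p + fa_subst f q"
proof -
  let ?S = "Poly_Mapping.keys p \<union> Poly_Mapping.keys q"
  have "Poly_Mapping.keys (p + q) \<subseteq> ?S" by (rule Poly_Mapping.keys_add)
  then show ?thesis
    by (simp add: subst_gen[of ?S] lookup_add sc_add distrib_right sum.distrib)
qed

lemma subst_zero: "fa_subst f 0 = 0"
  by (simp add: fa_subst_def)

lemma subst_minus: "fa_subst f (p - q) = fa_subst f p - fa_subst f q"
  by (metis add_diff_cancel diff_add_cancel subst_add)

lemma subst_uminus: "fa_subst f (- p) = - fa_subst f p"
  by (metis diff_0 subst_minus subst_zero)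

lemma subst_sum: "finite I \<Longrightarrow> fa_subst f (\<Sum>i\<in>I. g i) = (\<Sum>i\<in>I. fa_subst f (g i))"
  by (induct I rule: finite_induct) (simp_all add: subst_zero subst_add)

lemma subst_single: "fa_subst f (Poly_Mapping.single ww c) = sc c * fa_word_subst f ww"
  by (subst subst_gen[of "{ww}"]) (auto simp: lookup_single)

lemma subst_single_mult: "fa_subst f (Poly_Mapping.single a c * Poly_Mapping.single b d) =
   fa_subst f (Poly_Mapping.single a c) * fa_subst f (Poly_Mapping.single b d)"
proof -
  have "fa_subst f (Poly_Mapping.single a c * Poly_Mapping.single b d) =
     sc c * (sc d * fa_word_subst f a) * fa_word_subst f b"
    by (simp only: mult_single subst_single plus_list_def ws_append sc_mult mult.assoc)
  also have "\<dots> = sc c * (fa_word_subst f a * sc d) * fa_word_subst f b"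
    by (simp only: sc_central[of d "fa_word_subst f a"])
  finally show ?thesis by (simp only: subst_single mult.assoc)
qed

lemma subst_mult: "fa_subst f (p * q) = fa_subst f p * fa_subst f q"
proof -
  have "fa_subst f (p * q) = fa_subst f ((\<Sum>a\<in>Poly_Mapping.keys p. Poly_Mapping.single a (Poly_Mapping.lookup p a)) *
     (\<Sum>b\<in>Poly_Mapping.keys q. Poly_Mapping.single b (Poly_Mapping.lookup q b)))"
    using fa_expand[of p] fa_expand[of q] by simp
  also have "\<dots> = (\<Sum>a\<in>Poly_Mapping.keys p. \<Sum>b\<in>Poly_Mapping.keys q.
      fa_subst f (Poly_Mapping.single a (Poly_Mapping.lookup p a)) * fa_subst f (Poly_Mapping.single b (Poly_Mapping.lookup q b)))"
    by (simp only: sum_distrib_left sum_distrib_right subst_sum finite_keys subst_single_mult) (rule sum.swap)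
  also have "\<dots> = fa_subst f (\<Sum>a\<in>Poly_Mapping.keys p. Poly_Mapping.single a (Poly_Mapping.lookup p a)) *
      fa_subst f (\<Sum>b\<in>Poly_Mapping.keys q. Poly_Mapping.single b (Poly_Mapping.lookup q b))"
    by (simp only: subst_sum finite_keys sum_distrib_left sum_distrib_right) (rule sum.swap)
  also have "\<dots> = fa_subst f p * fa_subst f q"
    using fa_expand[of p, symmetric] fa_expand[of q, symmetric] by simp
  finally show ?thesis .
qed

lemma subst_one: "fa_subst (f::nat \<Rightarrow> 'k::field fa) 1 = 1"
proof -
  have "(1::'k::field fa) = Poly_Mapping.single [] 1" by (simp add: zero_list_def[symmetric])
  then show ?thesis using subst_single[of f "[]" 1] ws_nil[of f] sc_one by (metis mult_1)
qed

lemma subst_var: "fa_subst f (fa_var j) = f j"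
  by (simp add: fa_var_def subst_single sc_one fa_word_subst_def fa_one_eq fa_mult_eq)

lemma subst_sc: "fa_subst f (sc c) = sc c"
  by (simp add: sc_def subst_single ws_nil)

lemma subst_pow: "fa_subst f (x ^ n) = fa_subst f x ^ n"
  by (induct n) (simp_all add: subst_one subst_mult)

lemma subst_endo: "fa_endo (fa_subst f)"
  unfolding fa_endo_def fa_smult_eq fa_mult_eq fa_one_eq
  by (simp add: subst_add subst_mult subst_one subst_sc[unfolded sc_def])



definition cm :: "'a::ring \<Rightarrow> 'a \<Rightarrow> 'a" where "cm a b = a * b - b * a"

lemma cm_mult_left: "cm (a * b) z = a * cm b z + cm a z * b"
  by (simp add: cm_def algebra_simps)
lemma cm_mult_right: "cm z (a * b) = a * cm z b + cm z a * b"
  by (simp add: cm_def algebra_simps)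
lemma cm_add_left: "cm (a + b) z = cm a z + cm b z"
  by (simp add: cm_def algebra_simps)
lemma cm_diff_left: "cm (a - b) z = cm a z - cm b z"
  by (simp add: cm_def algebra_simps)
lemma cm_antisym: "cm b a = - cm a b"
  by (simp add: cm_def algebra_simps)
lemma cm_self: "cm a a = 0"
  by (simp add: cm_def)
lemma cm_one: "cm (1::'a::ring_1) z = 0"
  by (simp add: cm_def)
lemma cm_pow_self: "cm (x ^ n) (x::'a::ring_1) = 0"
  unfolding cm_def by (simp only: power_commutes diff_self)
lemma cm_sum_left: "cm (\<Sum>i\<in>I. f i) z = (\<Sum>i\<in>I. cm (f i) z)"
  by (simp add: cm_def sum_distrib_left sum_distrib_right sum_subtractf)
lemma cm_sc: "cm (sc c * X) y = sc c * cm X y"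
proof -
  have "y * (sc c * X) = sc c * (y * X)"
    by (simp only: mult.assoc[symmetric] sc_central[of c y])
  then show ?thesis by (simp add: cm_def right_diff_distrib mult.assoc)
qed

lemma fa_comm_cm: "fa_comm a b = cm a b"
  by (simp add: fa_comm_eq cm_def)

lemma subst_cm: "fa_subst f (cm a b) = cm (fa_subst f a) (fa_subst f b)"
  by (simp add: cm_def subst_minus subst_mult)

lemma T3_all: "x \<in> T3 \<longleftrightarrow> (\<forall>V. T_ideal V \<and> fa_comm (fa_comm (fa_var 1) (fa_var 2)) (fa_var 3) \<in> V \<longrightarrow> x \<in> V)"
  by (auto simp: T3_def T_ideal_gen_def)

lemma T3_zero: "0 \<in> T3"
  by (auto simp: T3_all T_ideal_def T_space_def fa_subspace_def)
lemma T3_add: "x \<in> T3 \<Longrightarrow> y \<in> T3 \<Longrightarrow> x + y \<in> T3"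
  by (auto simp: T3_all T_ideal_def T_space_def fa_subspace_def)
lemma T3_left: "x \<in> T3 \<Longrightarrow> a * x \<in> T3"
  by (auto simp: T3_all T_ideal_def fa_mult_eq)
lemma T3_right: "x \<in> T3 \<Longrightarrow> x * a \<in> T3"
  by (auto simp: T3_all T_ideal_def fa_mult_eq)
lemma T3_gen: "cm (cm a b) c \<in> (T3::'k::field fa set)"
proof -
  define f where "f = (\<lambda>j::nat. if j = 1 then a else if j = 2 then b else (c::'k fa))"
  have e: "fa_subst f (fa_comm (fa_comm (fa_var 1) (fa_var 2)) (fa_var 3)) = cm (cm a b) c"
    by (simp add: fa_comm_cm subst_cm subst_var f_def)
  show ?thesis unfolding T3_all
  proof (intro allI impI)
    fix V :: "'k fa set" assume "T_ideal V \<and> fa_comm (fa_comm (fa_var 1) (fa_var 2)) (fa_var 3) \<in> V"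
    then show "cm (cm a b) c \<in> V" using subst_endo[of f] e
      unfolding T_ideal_def T_space_def by metis
  qed
qed

lemma S2_all: "x \<in> S2 \<longleftrightarrow> (\<forall>V. T_space V \<and> fa_comm (fa_var 1) (fa_var 2) \<in> V \<longrightarrow> x \<in> V)"
  by (auto simp: S2_def T_space_gen_def)

lemma S2_cm: "cm a b \<in> (S2::'k::field fa set)"
proof -
  define f where "f = (\<lambda>j::nat. if j = 1 then a else (b::'k fa))"
  have e: "fa_subst f (fa_comm (fa_var 1) (fa_var 2)) = cm a b"
    by (simp add: fa_comm_cm subst_cm subst_var f_def)
  show ?thesis unfolding S2_all
  proof (intro allI impI)
    fix V :: "'k fa set" assume "T_space V \<and> fa_comm (fa_var 1) (fa_var 2) \<in> V"
    then show "cm a b \<in> V" using subst_endo[of f] e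
      unfolding T_space_def by metis
  qed
qed



locale TI =
  fixes T :: "'k::field fa set"
  assumes T0: "0 \<in> T" and Tadd: "x \<in> T \<Longrightarrow> y \<in> T \<Longrightarrow> x + y \<in> T"
    and TL: "x \<in> T \<Longrightarrow> a * x \<in> T" and TR: "x \<in> T \<Longrightarrow> x * a \<in> T"
    and Tg: "cm (cm a b) c \<in> T"
begin

lemma Tneg: "x \<in> T \<Longrightarrow> - x \<in> T"
  using TL[of x "-1"] by simp
lemma Tdiff: "x \<in> T \<Longrightarrow> y \<in> T \<Longrightarrow> x - y \<in> T"
  using Tadd Tneg by (metis diff_conv_add_uminus)
lemma Tsum: "(\<And>i. i \<in> I \<Longrightarrow> f i \<in> T) \<Longrightarrow> sum f I \<in> T"
  by (induct I rule: infinite_finite_induct) (auto intro: T0 Tadd)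
lemma Ttrans: "x - y \<in> T \<Longrightarrow> y - z \<in> T \<Longrightarrow> x - z \<in> T"
  using Tadd[of "x - y" "y - z"] by simp

definition cen :: "'k fa \<Rightarrow> bool" where "cen x \<longleftrightarrow> (\<forall>z. cm x z \<in> T)"

lemma cen_cm: "cen (cm a b)"
  using Tg by (simp add: cen_def)
lemma cen_mult: "cen a \<Longrightarrow> cen b \<Longrightarrow> cen (a * b)"
  unfolding cen_def cm_mult_left by (auto intro: Tadd TL TR)
lemma cen_one: "cen 1"
  by (simp add: cen_def cm_one T0)
lemma cen_swapL: "cen c \<Longrightarrow> W * (c * X) - c * (W * X) \<in> T"
proof -
  assume "cen c"
  then have "cm c W * X \<in> T" by (simp add: cen_def TR)
  moreover have "W * (c * X) - c * (W * X) = - (cm c W * X)"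
    by (simp add: cm_def algebra_simps)
  ultimately show ?thesis using Tneg by simp
qed
lemma ann_left: "cen c \<Longrightarrow> c * X \<in> T \<Longrightarrow> c * (W * X) \<in> T"
proof -
  assume a: "cen c" "c * X \<in> T"
  have "c * (W * X) = W * (c * X) - (W * (c * X) - c * (W * X))" by simp
  then show ?thesis using a cen_swapL[OF a(1)] TL[OF a(2)] Tdiff by metis
qed

lemma F4: "cm y t * cm x z + cm x y * cm z t \<in> T"
proof -
  have e: "cm (cm x (y * z)) t = y * cm (cm x z) t + cm y t * cm x z + (cm x y * cm z t + cm (cm x y) t * z)"
    by (simp only: cm_mult_right cm_add_left cm_mult_left add.assoc)
  have "cm y t * cm x z + cm x y * cm z t = cm (cm x (y * z)) t - y * cm (cm x z) t - cm (cm x y) t * z"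
    by (simp add: e algebra_simps)
  then show ?thesis using Tg TL TR Tdiff by metis
qed
lemma F2: "cm x y * cm x z \<in> T"
  using F4[of y z x x] by (simp add: cm_self)
lemma F2': "cm x y * cm y z \<in> T"
  using Tneg[OF F2[of y x z]] by (simp add: cm_antisym[of x y])

lemma P1: "cen c \<Longrightarrow> (\<And>z. c * cm s z \<in> T) \<Longrightarrow> c * cm (s ^ n) z \<in> T"
proof (induct n)
  case 0 then show ?case by (simp add: cm_one T0)
next
  case (Suc n)
  have "c * cm (s ^ Suc n) z = c * (s * cm (s ^ n) z) + (c * cm s z) * s ^ n"
    by (simp add: cm_mult_left distrib_left mult.assoc)
  then show ?case using Suc ann_left TR Tadd by metis
qed

lemma powcm: "cm (x ^ Suc n) y - of_nat (Suc n) * (cm x y * x ^ n) \<in> T"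
proof (induct n)
  case 0 then show ?case by (simp add: T0)
next
  case (Suc n)
  define t where "t = cm (x ^ Suc n) y - of_nat (Suc n) * (cm x y * x ^ n)"
  have tT: "t \<in> T" using Suc t_def by simp
  have sw: "x * (cm x y * x ^ n) - cm x y * (x * x ^ n) \<in> T"
    using cen_swapL[OF cen_cm] by blast
  have "cm (x ^ Suc (Suc n)) y - of_nat (Suc (Suc n)) * (cm x y * x ^ Suc n)
      = x * t + of_nat (Suc n) * (x * (cm x y * x ^ n) - cm x y * (x * x ^ n))"
    unfolding t_def
    by (simp add: cm_mult_left algebra_simps mult_of_nat_commute)
  then show ?case using TL[OF tT] TL[OF sw] Tadd by metis
qed

definition Kp :: "nat \<Rightarrow> 'k fa \<Rightarrow> 'k fa \<Rightarrow> 'k fa" where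
  "Kp n u v = cm u v * (u ^ n * v ^ n)"

lemma cen_K: "cen (Kp n u v)"
  unfolding cen_def
proof
  fix z
  let ?c = "cm u v"
  have "cm (Kp n u v) z = ?c * (u ^ n * cm (v ^ n) z) + (?c * cm (u ^ n) z) * v ^ n + cm ?c z * (u ^ n * v ^ n)"
    by (simp add: Kp_def cm_mult_left distrib_left mult.assoc)
  moreover have "?c * (u ^ n * cm (v ^ n) z) \<in> T"
    by (rule ann_left[OF cen_cm P1[OF cen_cm F2']])
  moreover have "(?c * cm (u ^ n) z) * v ^ n \<in> T"
    by (rule TR[OF P1[OF cen_cm F2]])
  moreover have "cm ?c z * (u ^ n * v ^ n) \<in> T"
    using TR Tg by blast
  ultimately show "cm (Kp n u v) z \<in> T" using Tadd by metis
qed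

lemma K_antisym: "Kp n y x + Kp n x y \<in> T"
proof -
  have "Kp n y x + Kp n x y = cm y x * cm (y ^ n) (x ^ n)"
    by (simp add: Kp_def cm_antisym[of x y] cm_def algebra_simps)
  then show ?thesis using P1[OF cen_cm F2] by metis
qed

end


lemma pascal:
  fixes m :: "nat \<Rightarrow> nat \<Rightarrow> 'a::ring_1"
  shows "(\<Sum>k\<le>n. of_nat (n choose k) * m (Suc k) (n - k)) + (\<Sum>k\<le>n. of_nat (n choose k) * m k (Suc (n - k)))
       = (\<Sum>k\<le>Suc n. of_nat (Suc n choose k) * m k (Suc n - k))"
proof -
  have r1: "(\<Sum>k\<le>Suc n. of_nat (Suc n choose k) * m k (Suc n - k))
     = m 0 (Suc n) + (\<Sum>k\<le>n. of_nat (n choose k) * m (Suc k) (n - k)) + (\<Sum>k\<le>n. of_nat (n choose Suc k) * m (Suc k) (n - k))"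
    by (subst sum.atMost_Suc_shift) (simp del: sum.atMost_Suc add: distrib_right sum.distrib add.assoc)
  have r2: "(\<Sum>k\<le>n. of_nat (n choose k) * m k (Suc (n - k))) = m 0 (Suc n) + (\<Sum>k<n. of_nat (n choose Suc k) * m (Suc k) (Suc (n - Suc k)))"
    by (simp add: sum.atMost_shift)
  have r3: "(\<Sum>k\<le>n. of_nat (n choose Suc k) * m (Suc k) (n - k)) = (\<Sum>k<n. of_nat (n choose Suc k) * m (Suc k) (Suc (n - Suc k)))"
    by (simp add: atMost_Suc_eq_insert_0[symmetric] lessThan_Suc_atMost[symmetric] Suc_diff_Suc binomial_eq_0)
  show ?thesis using r1 r2 r3 by (simp add: algebra_simps)
qed

lemma of_nat_left: "x * (of_nat m * y) = of_nat m * (x * (y::'a::ring_1))"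
  by (metis mult.assoc mult_of_nat_commute)

definition E :: "'a::ring_1 \<Rightarrow> 'a \<Rightarrow> nat \<Rightarrow> 'a" where
  "E a b n = (\<Sum>k\<le>n. of_nat (n choose k) * (a ^ k * b ^ (n - k)))"

context TI
begin

definition Rr :: "'k fa \<Rightarrow> 'k fa \<Rightarrow> 'k fa \<Rightarrow> bool" where "Rr c X Y \<longleftrightarrow> c * (X - Y) \<in> T"

lemma R_refl: "Rr c X X" by (simp add: Rr_def T0)
lemma R_trans: "Rr c X Y \<Longrightarrow> Rr c Y Z \<Longrightarrow> Rr c X Z"
  unfolding Rr_def using Tadd[of "c * (X - Y)" "c * (Y - Z)"] by (simp add: algebra_simps)
lemma R_eq: "X = Y \<Longrightarrow> Rr c X Y" by (simp add: R_refl)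
lemma R_add: "Rr c X Y \<Longrightarrow> Rr c X' Y' \<Longrightarrow> Rr c (X + X') (Y + Y')"
  unfolding Rr_def using Tadd[of "c * (X - Y)" "c * (X' - Y')"] by (simp add: algebra_simps)
lemma R_right: "Rr c X Y \<Longrightarrow> Rr c (X * W) (Y * W)"
  unfolding Rr_def using TR[of "c * (X - Y)" W] by (simp add: algebra_simps)
lemma R_left: "cen c \<Longrightarrow> Rr c X Y \<Longrightarrow> Rr c (W * X) (W * Y)"
  unfolding Rr_def using ann_left[of c "X - Y" W] by (simp add: algebra_simps)
lemma R_sum: "(\<And>i. i \<in> I \<Longrightarrow> Rr c (f i) (g i)) \<Longrightarrow> Rr c (sum f I) (sum g I)"
  by (induct I rule: infinite_finite_induct) (auto intro: R_refl R_add)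

lemma R_ab: "c * cm a b \<in> T \<Longrightarrow> Rr c (b * a) (a * b)"
  unfolding Rr_def using Tneg[of "c * cm a b"] by (simp add: cm_def algebra_simps)

lemma R_bpow: "cen c \<Longrightarrow> c * cm a b \<in> T \<Longrightarrow> Rr c (b * a ^ k) (a ^ k * b)"
proof (induct k)
  case 0 then show ?case by (simp add: R_refl)
next
  case (Suc k)
  have "Rr c ((b * a) * a ^ k) ((a * b) * a ^ k)" by (rule R_right[OF R_ab[OF Suc(3)]])
  moreover have "Rr c (a * (b * a ^ k)) (a * (a ^ k * b))" by (rule R_left[OF Suc(2) Suc(1)[OF Suc(2,3)]])
  ultimately show ?case by (simp add: mult.assoc) (metis R_trans mult.assoc)
qed

lemma binom: "cen c \<Longrightarrow> c * cm a b \<in> T \<Longrightarrow> Rr c ((a + b) ^ n) (E a b n)"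
proof (induct n)
  case 0 then show ?case by (simp add: E_def R_refl)
next
  case (Suc n)
  have s1: "Rr c ((a + b) ^ Suc n) ((a + b) * E a b n)"
    using R_left[OF Suc(2) Suc(1)[OF Suc(2,3)], of "a + b"] by simp
  have s2: "(a + b) * E a b n = (\<Sum>k\<le>n. of_nat (n choose k) * (a ^ Suc k * b ^ (n - k)))
      + (\<Sum>k\<le>n. of_nat (n choose k) * ((b * a ^ k) * b ^ (n - k)))"
  proof -
    have "a * E a b n = (\<Sum>k\<le>n. of_nat (n choose k) * (a ^ Suc k * b ^ (n - k)))"
      unfolding E_def sum_distrib_left by (rule sum.cong, simp, subst of_nat_left, simp only: mult.assoc power_Suc)
    moreover have "b * E a b n = (\<Sum>k\<le>n. of_nat (n choose k) * ((b * a ^ k) * b ^ (n - k)))"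
      unfolding E_def sum_distrib_left by (rule sum.cong, simp, subst of_nat_left, simp only: mult.assoc power_Suc)
    ultimately show ?thesis by (simp add: distrib_right)
  qed
  have s3: "Rr c (\<Sum>k\<le>n. of_nat (n choose k) * ((b * a ^ k) * b ^ (n - k)))
      (\<Sum>k\<le>n. of_nat (n choose k) * (a ^ k * b ^ Suc (n - k)))"
  proof (rule R_sum)
    fix k
    have "Rr c ((b * a ^ k) * b ^ (n - k)) ((a ^ k * b) * b ^ (n - k))"
      by (rule R_right[OF R_bpow[OF Suc(2,3)]])
    then have "Rr c (of_nat (n choose k) * ((b * a ^ k) * b ^ (n - k))) (of_nat (n choose k) * ((a ^ k * b) * b ^ (n - k)))"
      by (rule R_left[OF Suc(2)])
    then show "Rr c (of_nat (n choose k) * ((b * a ^ k) * b ^ (n - k))) (of_nat (n choose k) * (a ^ k * b ^ Suc (n - k)))"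
      by (simp only: mult.assoc power_Suc)
  qed
  have s4: "(\<Sum>k\<le>n. of_nat (n choose k) * (a ^ Suc k * b ^ (n - k))) + (\<Sum>k\<le>n. of_nat (n choose k) * (a ^ k * b ^ Suc (n - k)))
      = E a b (Suc n)"
    unfolding E_def by (fact pascal[of n "\<lambda>i j. a ^ i * b ^ j"])
  have "Rr c ((a + b) * E a b n) (E a b (Suc n))"
    unfolding s2 s4[symmetric] by (rule R_add[OF R_refl s3])
  then show ?case using s1 R_trans by blast
qed

end


lemma aux_ring:
  fixes A B N M t1 t2 cmA cmB ca cb ai bj :: "'a::ring"
  assumes "cmB = t1 + N * (cb * bj)" "cmA = t2 + M * (ca * ai)" "A * (N * (cb * bj)) = N * (A * (cb * bj))"
  shows "A * cmB + cmA * B - (M * (ca * (ai * B)) + N * (cb * (A * bj))) = A * t1 + N * (A * (cb * bj) - cb * (A * bj)) + t2 * B"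
  using assms by (simp add: algebra_simps)

context TI
begin

lemma mono_cm:
  "cm (a ^ Suc i * b ^ Suc j) y - (of_nat (Suc i) * (cm a y * (a ^ i * b ^ Suc j)) + of_nat (Suc j) * (cm b y * (a ^ Suc i * b ^ j))) \<in> T"
proof -
  define t1 where "t1 = cm (b ^ Suc j) y - of_nat (Suc j) * (cm b y * b ^ j)"
  define t2 where "t2 = cm (a ^ Suc i) y - of_nat (Suc i) * (cm a y * a ^ i)"
  have t1T: "t1 \<in> T" unfolding t1_def by (rule powcm)
  have t2T: "t2 \<in> T" unfolding t2_def by (rule powcm)
  have sw: "a ^ Suc i * (cm b y * b ^ j) - cm b y * (a ^ Suc i * b ^ j) \<in> T"
    by (rule cen_swapL[OF cen_cm])
  have e: "cm (a ^ Suc i * b ^ Suc j) y - (of_nat (Suc i) * (cm a y * (a ^ i * b ^ Suc j)) + of_nat (Suc j) * (cm b y * (a ^ Suc i * b ^ j)))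
     = a ^ Suc i * t1 + of_nat (Suc j) * (a ^ Suc i * (cm b y * b ^ j) - cm b y * (a ^ Suc i * b ^ j)) + t2 * b ^ Suc j"
    unfolding cm_mult_left
    by (rule aux_ring, simp add: t1_def, simp add: t2_def, rule of_nat_left)
  show ?thesis unfolding e using Tadd TL TR t1T t2T sw by metis
qed

definition gc :: "nat \<Rightarrow> nat \<Rightarrow> 'k" where "gc n k = of_nat (n choose k) / of_nat (Suc k)"
definition GG :: "nat \<Rightarrow> 'k fa \<Rightarrow> 'k fa \<Rightarrow> 'k fa" where
  "GG n a b = (\<Sum>k<n. sc (gc n k) * (a ^ Suc k * b ^ (n - k)))"

lemma Dmain:
  assumes nz: "\<forall>k<n. of_nat (Suc k) \<noteq> (0::'k)"
  shows "cm (a + b) y * (a + b) ^ n - cm a y * a ^ n - cm b y * b ^ n - cm (GG n a b) y \<in> T"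
proof -
  let ?ca = "cm a y" and ?cb = "cm b y"
  define X where "X k = of_nat (Suc k) * (?ca * (a ^ k * b ^ Suc (n - Suc k))) + of_nat (Suc (n - Suc k)) * (?cb * (a ^ Suc k * b ^ (n - Suc k)))" for k
  define A' where "A' = (\<Sum>k<n. of_nat (n choose k) * (a ^ k * b ^ (n - k)))"
  define B' where "B' = (\<Sum>k<n. of_nat (n choose Suc k) * (a ^ Suc k * b ^ (n - Suc k)))"
  have S1: "cm (GG n a b) y = (\<Sum>k<n. sc (gc n k) * cm (a ^ Suc k * b ^ Suc (n - Suc k)) y)"
    unfolding GG_def cm_sum_left cm_sc by (rule sum.cong) (auto simp: Suc_diff_Suc)
  have S2: "(\<Sum>k<n. sc (gc n k) * cm (a ^ Suc k * b ^ Suc (n - Suc k)) y) - (\<Sum>k<n. sc (gc n k) * X k) \<in> T"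
    unfolding sum_subtractf[symmetric] right_diff_distrib[symmetric] X_def
    by (rule Tsum, rule TL, rule mono_cm)
  have S3: "(\<Sum>k<n. sc (gc n k) * X k) = ?ca * A' + ?cb * B'"
    unfolding A'_def B'_def sum_distrib_left sum.distrib[symmetric]
  proof (rule sum.cong)
    fix k assume "k \<in> {..<n}"
    then have kn: "k < n" by simp
    have nz1: "of_nat (Suc k) \<noteq> (0::'k)" using nz kn by blast
    have c1: "gc n k * of_nat (Suc k) = of_nat (n choose k)"
      using nz1 by (simp add: gc_def)
    have nat2: "(n choose k) * Suc (n - Suc k) = (n choose Suc k) * Suc k"
      using kn binomial_absorb_comp[of n k] binomial_absorption[of k n]
      by (simp add: Suc_diff_Suc mult.commute)
    have c2: "gc n k * of_nat (Suc (n - Suc k)) = of_nat (n choose Suc k)"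
    proof -
      have "gc n k * of_nat (Suc (n - Suc k)) = of_nat ((n choose k) * Suc (n - Suc k)) / of_nat (Suc k)"
        by (simp only: gc_def of_nat_mult times_divide_eq_left)
      also have "\<dots> = of_nat (n choose Suc k)"
        using nz1 by (simp only: nat2 of_nat_mult) simp
      finally show ?thesis .
    qed
    have m1: "sc (gc n k) * (of_nat (Suc k) * Z) = of_nat (n choose k) * Z" for Z
      by (simp only: mult.assoc[symmetric] sc_of_nat[symmetric] sc_mult[symmetric] c1)
    have m2: "sc (gc n k) * (of_nat (Suc (n - Suc k)) * Z) = of_nat (n choose Suc k) * Z" for Z
      by (simp only: mult.assoc[symmetric] sc_of_nat[symmetric] sc_mult[symmetric] c2)
    have bb: "b ^ Suc (n - Suc k) = b ^ (n - k)" using kn by (simp add: Suc_diff_Suc)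
    show "sc (gc n k) * X k = ?ca * (of_nat (n choose k) * (a ^ k * b ^ (n - k))) + ?cb * (of_nat (n choose Suc k) * (a ^ Suc k * b ^ (n - Suc k)))"
      unfolding X_def distrib_left m1 m2 bb by (simp only: of_nat_left)
  qed simp
  have Ea: "E a b n - a ^ n = A'"
    unfolding E_def A'_def by (simp add: lessThan_Suc_atMost[symmetric])
  have Eb: "E a b n - b ^ n = B'"
    unfolding E_def B'_def by (simp add: sum.atMost_shift)
  have ra: "?ca * ((a + b) ^ n - E a b n) \<in> T"
    using binom[OF cen_cm F2, of a y b n] by (simp add: Rr_def)
  have rb0: "?cb * cm a b \<in> T"
    using Tneg[OF F2[of b y a]] by (simp add: cm_antisym[of a b])
  have rb: "?cb * ((a + b) ^ n - E a b n) \<in> T"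
    using binom[OF cen_cm rb0, of n] by (simp add: Rr_def)
  have Dexp: "cm (a + b) y * (a + b) ^ n - cm a y * a ^ n - cm b y * b ^ n - cm (GG n a b) y
     = (?ca * ((a + b) ^ n - E a b n) + ?cb * ((a + b) ^ n - E a b n))
       + ((\<Sum>k<n. sc (gc n k) * X k) - (\<Sum>k<n. sc (gc n k) * cm (a ^ Suc k * b ^ Suc (n - Suc k)) y))"
    unfolding S1 S3 Ea[symmetric] Eb[symmetric] cm_add_left by (simp add: algebra_simps)
  show ?thesis unfolding Dexp using Tadd[OF Tadd[OF ra rb] Tneg[OF S2]] by (simp add: algebra_simps)
qed

end


lemma aux2: "(A * K - B * K - C * K) - cm (P * K) z = (A - B - C - cm P z) * K - P * cm K (z::'a::ring)"
  by (simp add: cm_def algebra_simps)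
lemma aux3: "W * X - W * Y - W * Z - cm (W * Q) v = W * (X - Y - Z - cm Q v) - cm W v * (Q::'a::ring)"
  by (simp add: cm_def algebra_simps)
lemma aux4: "W * X - W * Y - W * Z - cm (W * v) Q = W * (X - Y - Z - cm v Q) - cm W Q * (v::'a::ring)"
  by (simp add: cm_def algebra_simps)

context TI
begin

lemma delta1:
  assumes nz: "\<forall>k<n. of_nat (Suc k) \<noteq> (0::'k)"
  shows "Kp n (a + b) y - Kp n a y - Kp n b y - cm (GG n a b * y ^ n) y \<in> T"
proof -
  have "Kp n (a + b) y - Kp n a y - Kp n b y - cm (GG n a b * y ^ n) y
      = (cm (a + b) y * (a + b) ^ n - cm a y * a ^ n - cm b y * b ^ n - cm (GG n a b) y) * y ^ n"
    unfolding Kp_def cm_mult_left[of "GG n a b"] cm_pow_self by (simp add: algebra_simps)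
  then show ?thesis using TR[OF Dmain[OF nz]] by metis
qed

lemma delta2:
  assumes nz: "\<forall>k<n. of_nat (Suc k) \<noteq> (0::'k)"
  shows "Kp n y (a + b) - Kp n y a - Kp n y b - cm y (GG n a b * y ^ n) \<in> T"
proof -
  let ?Q = "GG n a b * y ^ n"
  have "Kp n y (a + b) - Kp n y a - Kp n y b - cm y ?Q
     = - (Kp n (a + b) y - Kp n a y - Kp n b y - cm ?Q y) + (Kp n y (a + b) + Kp n (a + b) y)
       - (Kp n y a + Kp n a y) - (Kp n y b + Kp n b y)"
    by (simp add: cm_antisym[of y ?Q] algebra_simps)
  then show ?thesis
    using Tdiff[OF Tdiff[OF Tadd[OF Tneg[OF delta1[OF nz]] K_antisym] K_antisym] K_antisym] by metis
qed

primrec Wp :: "nat \<Rightarrow> nat \<Rightarrow> (nat \<Rightarrow> 'k fa) \<Rightarrow> 'k fa" where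
  "Wp n 0 u = 1"
| "Wp n (Suc m) u = Wp n m u * Kp n (u (2 * m + 1)) (u (2 * m + 2))"

lemma Wp_cong: "(\<And>j. 1 \<le> j \<Longrightarrow> j \<le> 2 * m \<Longrightarrow> u j = u' j) \<Longrightarrow> Wp n m u = Wp n m u'"
  by (induct m) auto

lemma cen_Wp: "cen (Wp n m u)"
  by (induct m) (simp_all add: cen_one cen_mult cen_K)

lemma main_ind:
  assumes nz: "\<forall>k<n. of_nat (Suc k) \<noteq> (0::'k)"
  shows "1 \<le> i \<Longrightarrow> i \<le> 2 * m \<Longrightarrow>
    \<exists>P z. Wp n m (u(i := a + b)) - Wp n m (u(i := a)) - Wp n m (u(i := b)) - cm P z \<in> T"
proof (induct m)
  case 0 then show ?case by simp
next
  case (Suc m)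
  show ?case
  proof (cases "i \<le> 2 * m")
    case True
    then obtain P z where Pz: "Wp n m (u(i := a + b)) - Wp n m (u(i := a)) - Wp n m (u(i := b)) - cm P z \<in> T"
      using Suc by blast
    let ?K = "Kp n (u (2 * m + 1)) (u (2 * m + 2))"
    let ?D = "Wp n m (u(i := a + b)) - Wp n m (u(i := a)) - Wp n m (u(i := b))"
    have h1: "\<And>x. Wp n (Suc m) (u(i := x)) = Wp n m (u(i := x)) * ?K"
      using True by simp
    have e: "Wp n (Suc m) (u(i := a + b)) - Wp n (Suc m) (u(i := a)) - Wp n (Suc m) (u(i := b)) - cm (P * ?K) z
       = (?D - cm P z) * ?K - P * cm ?K z"
      unfolding h1 by (rule aux2)
    have "P * cm ?K z \<in> T" using cen_K TL unfolding cen_def by blast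
    then have "Wp n (Suc m) (u(i := a + b)) - Wp n (Suc m) (u(i := a)) - Wp n (Suc m) (u(i := b)) - cm (P * ?K) z \<in> T"
      unfolding e using TR[OF Pz] Tdiff by blast
    then show ?thesis by blast
  next
    case False
    then have ii: "i = 2 * m + 1 \<or> i = 2 * m + 2" using Suc(3) by auto
    let ?W = "Wp n m u"
    have Wc: "\<And>x. Wp n m (u(i := x)) = ?W" by (rule Wp_cong) (use False in auto)
    from ii show ?thesis
    proof
      assume i1: "i = 2 * m + 1"
      let ?v = "u (2 * m + 2)"
      let ?Q = "GG n a b * ?v ^ n"
      have e: "Wp n (Suc m) (u(i := a + b)) - Wp n (Suc m) (u(i := a)) - Wp n (Suc m) (u(i := b)) - cm (?W * ?Q) ?v
         = ?W * (Kp n (a + b) ?v - Kp n a ?v - Kp n b ?v - cm ?Q ?v) - cm ?W ?v * ?Q"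
      proof -
        have h: "\<And>x. Wp n (Suc m) (u(i := x)) = ?W * Kp n x ?v"
          using i1 Wc by simp
        show ?thesis unfolding h by (rule aux3)
      qed
      have "cm ?W ?v * ?Q \<in> T" using cen_Wp TR unfolding cen_def by blast
      then have "Wp n (Suc m) (u(i := a + b)) - Wp n (Suc m) (u(i := a)) - Wp n (Suc m) (u(i := b)) - cm (?W * ?Q) ?v \<in> T"
        unfolding e using TL[OF delta1[OF nz]] Tdiff by blast
      then show ?thesis by blast
    next
      assume i2: "i = 2 * m + 2"
      let ?v = "u (2 * m + 1)"
      let ?Q = "GG n a b * ?v ^ n"
      have e: "Wp n (Suc m) (u(i := a + b)) - Wp n (Suc m) (u(i := a)) - Wp n (Suc m) (u(i := b)) - cm (?W * ?v) ?Q
         = ?W * (Kp n ?v (a + b) - Kp n ?v a - Kp n ?v b - cm ?v ?Q) - cm ?W ?Q * ?v"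
      proof -
        have h: "\<And>x. Wp n (Suc m) (u(i := x)) = ?W * Kp n ?v x"
          using i2 Wc by simp
        show ?thesis unfolding h by (rule aux4)
      qed
      have "cm ?W ?Q * ?v \<in> T" using cen_Wp TR unfolding cen_def by blast
      then have "Wp n (Suc m) (u(i := a + b)) - Wp n (Suc m) (u(i := a)) - Wp n (Suc m) (u(i := b)) - cm (?W * ?v) ?Q \<in> T"
        unfolding e using TL[OF delta2[OF nz]] Tdiff by blast
      then show ?thesis by blast
    qed
  qed
qed

end

interpretation T3I: TI T3
  by unfold_locales (auto intro: T3_zero T3_add T3_left T3_right T3_gen)

lemma subst_Kp: "fa_subst f (T3I.Kp n x y) = T3I.Kp n (fa_subst f x) (fa_subst f y)"
  by (simp add: T3I.Kp_def subst_cm subst_mult subst_pow)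

lemma kappa_Kp: "kappa u v = T3I.Kp (CHAR('k) - 1) u (v::'k::field fa)"
  by (simp add: kappa_def T3I.Kp_def fa_mult_eq fa_comm_cm fa_pow_eq)

lemma subst_w: "fa_subst f (w m) = T3I.Wp (CHAR('k) - 1) m (f::nat \<Rightarrow> 'k::field fa)"
  by (induct m) (simp_all add: fa_one_eq subst_one fa_mult_eq subst_mult kappa_Kp subst_Kp subst_var)



theorem corollary2p2:
  fixes u :: "nat \<Rightarrow> 'k::field fa" and v :: "'k fa" and m i p :: nat
  assumes "prime p" and "p > 2" and "CHAR('k) = p"
    and "m \<ge> 1" and "1 \<le> i" and "i \<le> 2 * m"
  shows "w_at m (u(i := u i + v)) - (w_at m u + w_at m (u(i := v)))
           \<in> fa_setsum S2 T3"
proof -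
  let ?n = "CHAR('k) - 1"
  have nz: "\<forall>k<?n. of_nat (Suc k) \<noteq> (0::'k)"
  proof (intro allI impI)
    fix k assume "k < ?n"
    then have "0 < Suc k" "Suc k < p" using assms(3) by auto
    then have "\<not> p dvd Suc k" using nat_dvd_not_less by blast
    then show "of_nat (Suc k) \<noteq> (0::'k)" using assms(3) of_nat_eq_0_iff_char_dvd[of "Suc k", where 'a='k] by simp
  qed
  have wat: "\<And>u'. w_at m u' = T3I.Wp ?n m (u' :: nat \<Rightarrow> 'k fa)"
    unfolding w_at_def subst_w by (rule T3I.Wp_cong) auto
  obtain P z where Pz: "T3I.Wp ?n m (u(i := u i + v)) - T3I.Wp ?n m (u(i := u i)) - T3I.Wp ?n m (u(i := v)) - cm P z \<in> T3"
    using T3I.main_ind[OF nz assms(5,6)] by blast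
  define D where "D = w_at m (u(i := u i + v)) - (w_at m u + w_at m (u(i := v)))"
  have DT: "D - cm P z \<in> T3" using Pz by (simp add: D_def wat diff_diff_eq)
  have "D = cm P z + (D - cm P z)" by simp
  then have "D \<in> fa_setsum S2 T3" unfolding fa_setsum_def using S2_cm DT by blast
  then show ?thesis by (simp add: D_def)
qed


end
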